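(* Let $k\ge 1$ be an integer. Let $\boldsymbol{L}$ be the $(k+1)\times(k+1)$ lower triangular matrix with all entries on and below the diagonal equal to $1$ (and zeros above), let \[\boldsymbol{u}=\Big[\tfrac{1}{2^{k+1}},\tfrac{1}{2^{k+1}},\tfrac{1}{2^{k}},\tfrac{1}{2^{k-1}},\ldots,\tfrac{1}{2^2}\Big]\in\mathbb{R}^{k+1},\qquad \boldsymbol{v}=\Big[\tfrac{1}{2^{k}},\tfrac{1}{2^{k}-1},\tfrac{1}{2^{k-1}-1},\ldots,\tfrac{1}{2^2-1},\tfrac{1}{2-1}\Big]\in\mathbb{R}^{k+1},\] and $\boldsymbol{U}=\mathrm{Diag}(\boldsymbol{u})$, $\boldsymbol{V}=\mathrm{Diag}(\boldsymbol{v})$. Then for every $\boldsymbol{x}\in\mathbb{R}^{k+1}_{>0}$, \[ \mathcal{R}(\mathtt{KB})\;\ge\; R(\boldsymbol{x}):=\frac{\boldsymbol{x}^T\boldsymbol{L}^T\boldsymbol{V}\boldsymbol{L}^T\boldsymbol{U}\boldsymbol{L}\boldsymbol{V}\boldsymbol{L}\boldsymbol{x}}{\boldsymbol{x}^T\boldsymbol{L}^T\boldsymbol{U}\boldsymbol{L}\boldsymbol{x}}. \]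
   Context: Min-Weighted Sum Bin Packing (MWSBP): an instance consists of $n$ items with sizes $s_i\in(0,1]$ and weights $w_i>0$. A feasible solution is a partition of the items into bins $B_1,\ldots,B_p$ with $\sum_{i\in B_k}s_i\le 1$; its cost is $\sum_{k=1}^p k\sum_{i\in B_k}w_i$; $\mathtt{OPT}$ is the minimum cost. The Knapsack-Batching algorithm ($\mathtt{KB}$): for $k=1,2,\ldots$ while items remain, let $B_k$ be a subset of the remaining items of maximum total weight subject to total size at most $1$ (ties broken arbitrarily). The approximation ratio $\mathcal{R}(\mathtt{ALG})$ is the smallest $\rho\ge1$ such that on every instance (and for every way the algorithm may break ties) the cost of its output is at most $\rho\cdot\mathtt{OPT}$. *)

theory Defs
  imports "Jordan_Normal_Form.Matrix" "HOL-Library.Extended_Real"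
begin

definition valid_instance :: "nat \<Rightarrow> (nat \<Rightarrow> real) \<Rightarrow> (nat \<Rightarrow> real) \<Rightarrow> bool" where
  "valid_instance n s w \<longleftrightarrow> (\<forall>i<n. 0 < s i \<and> s i \<le> 1 \<and> 0 < w i)"

text \<open>A solution is given by a bin assignment b: item i goes to bin B_(b i), bins numbered from 1.\<close>
definition bin :: "nat \<Rightarrow> (nat \<Rightarrow> nat) \<Rightarrow> nat \<Rightarrow> nat set" where
  "bin n b k = {i. i < n \<and> b i = k}"

definition feasible :: "nat \<Rightarrow> (nat \<Rightarrow> real) \<Rightarrow> (nat \<Rightarrow> nat) \<Rightarrow> bool" where
  "feasible n s b \<longleftrightarrow> (\<forall>i<n. 1 \<le> b i) \<and> (\<forall>k. (\<Sum>i\<in>bin n b k. s i) \<le> 1)"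

definition cost :: "nat \<Rightarrow> (nat \<Rightarrow> real) \<Rightarrow> (nat \<Rightarrow> nat) \<Rightarrow> real" where
  "cost n w b = (\<Sum>k\<in>b ` {..<n}. real k * (\<Sum>i\<in>bin n b k. w i))"

definition OPT :: "nat \<Rightarrow> (nat \<Rightarrow> real) \<Rightarrow> (nat \<Rightarrow> real) \<Rightarrow> real" where
  "OPT n s w = Inf {cost n w b | b. feasible n s b}"

text \<open>Possible outputs of Knapsack-Batching (over all tie-breakings): for every k \<ge> 1,
  bin B_k is a maximum-weight subset of size at most 1 of the items remaining before step k.\<close>
definition KB_output :: "nat \<Rightarrow> (nat \<Rightarrow> real) \<Rightarrow> (nat \<Rightarrow> real) \<Rightarrow> (nat \<Rightarrow> nat) \<Rightarrow> bool" where
  "KB_output n s w b \<longleftrightarrow> (\<forall>i<n. 1 \<le> b i) \<and>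
     (\<forall>k\<ge>1. (\<Sum>i\<in>bin n b k. s i) \<le> 1 \<and>
        (\<forall>S. S \<subseteq> {i. i < n \<and> k \<le> b i} \<longrightarrow> (\<Sum>i\<in>S. s i) \<le> 1 \<longrightarrow>
              (\<Sum>i\<in>S. w i) \<le> (\<Sum>i\<in>bin n b k. w i)))"

text \<open>Approximation ratio of KB (infinity if no finite rho works).\<close>
definition KB_ratio :: ereal where
  "KB_ratio = Inf {ereal \<rho> | \<rho>. 1 \<le> \<rho> \<and>
     (\<forall>n s w b. valid_instance n s w \<longrightarrow> KB_output n s w b \<longrightarrow> cost n w b \<le> \<rho> * OPT n s w)}"

definition Diag :: "real vec \<Rightarrow> real mat" where
  "Diag d = mat (dim_vec d) (dim_vec d) (\<lambda>(i,j). if i = j then d $ i else 0)"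

definition L_mat :: "nat \<Rightarrow> real mat" where
  "L_mat k = mat (k+1) (k+1) (\<lambda>(i,j). if j \<le> i then 1 else 0)"

text \<open>u = [1/2^(k+1), 1/2^(k+1), 1/2^k, ..., 1/2^2] (0-based entries)\<close>
definition u_vec :: "nat \<Rightarrow> real vec" where
  "u_vec k = vec (k+1) (\<lambda>j. if j = 0 then 1 / 2^(k+1) else 1 / 2^(k+2-j))"

text \<open>v = [1/2^k, 1/(2^k-1), 1/(2^(k-1)-1), ..., 1/(2-1)] (0-based entries)\<close>
definition v_vec :: "nat \<Rightarrow> real vec" where
  "v_vec k = vec (k+1) (\<lambda>j. if j = 0 then 1 / 2^k else 1 / (2^(k+1-j) - 1))"

definition R_val :: "nat \<Rightarrow> real vec \<Rightarrow> real" where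
  "R_val k x = (let L = L_mat k; U = Diag (u_vec k); V = Diag (v_vec k) in
     (x \<bullet> ((L\<^sup>T * V * L\<^sup>T * U * L * V * L) *\<^sub>v x)) / (x \<bullet> ((L\<^sup>T * U * L) *\<^sub>v x)))"

end

theory Submission
  imports Defs
begin

lemma cost_sum: "cost n w b = (\<Sum>i<n. real (b i) * w i)"
proof -
  have "(\<Sum>i<n. real (b i) * w i) = (\<Sum>q\<in>b ` {..<n}. \<Sum>i\<in>{x\<in>{..<n}. b x = q}. real (b i) * w i)"
    by (rule sum.image_gen) simp
  also have "\<dots> = (\<Sum>q\<in>b ` {..<n}. real q * (\<Sum>i\<in>bin n b q. w i))"
    by (rule sum.cong) (auto simp: bin_def sum_distrib_left intro!: sum.cong)
  finally show ?thesis by (simp add: cost_def)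
qed

lemma OPT_le:
  assumes "valid_instance n s w" "feasible n s b"
  shows "OPT n s w \<le> cost n w b"
proof -
  have "bdd_below {cost n w b | b. feasible n s b}"
  proof (rule bdd_belowI[of _ 0], clarify)
    fix b' show "0 \<le> cost n w b'"
      unfolding cost_sum using assms(1) unfolding valid_instance_def
      by (intro sum_nonneg mult_nonneg_nonneg) (auto simp: less_imp_le)
  qed
  moreover have "cost n w b \<in> {cost n w b | b. feasible n s b}" using assms(2) by auto
  ultimately show ?thesis unfolding OPT_def by (intro cInf_lower)
qed

lemma prefix_locate:
  fixes f :: "nat \<Rightarrow> nat"
  assumes "p < (\<Sum>l<m. f l)"
  shows "\<exists>j<m. (\<Sum>l<j. f l) \<le> p \<and> p < (\<Sum>l<Suc j. f l)"
  using assms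
proof (induction m)
  case 0 then show ?case by simp
next
  case (Suc m)
  show ?case
  proof (cases "p < (\<Sum>l<m. f l)")
    case True with Suc.IH show ?thesis by (meson less_SucI)
  next
    case False with Suc.prems show ?thesis by (intro exI[of _ m]) auto
  qed
qed

lemma prefix_mono:
  fixes f :: "nat \<Rightarrow> nat"
  shows "j \<le> j' \<Longrightarrow> (\<Sum>l<j. f l) \<le> (\<Sum>l<j'. f l)"
  by (rule sum_mono2) auto

lemma prefix_unique:
  fixes f :: "nat \<Rightarrow> nat"
  assumes "(\<Sum>l<j. f l) \<le> p" "p < (\<Sum>l<Suc j. f l)"
    "(\<Sum>l<j'. f l) \<le> p" "p < (\<Sum>l<Suc j'. f l)"
  shows "j = j'"
proof (rule ccontr)
  assume "j \<noteq> j'"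
  then consider "Suc j \<le> j'" | "Suc j' \<le> j" by linarith
  then show False
  proof cases
    case 1 then show False using prefix_mono[OF 1, of f] assms by linarith
  next
    case 2 then show False using prefix_mono[OF 2, of f] assms by linarith
  qed
qed

lemma sum_split_add: "(\<Sum>i<a+b. g i) = (\<Sum>i<a. g i) + (\<Sum>r<b. g (a + r))"
  for g :: "nat \<Rightarrow> real"
  by (induction b) (auto simp: add.assoc)

lemma sum_prefix_blocks:
  fixes N :: "nat \<Rightarrow> nat" and g :: "nat \<Rightarrow> real"
  shows "(\<Sum>i<(\<Sum>l<m. N l). g i) = (\<Sum>j<m. \<Sum>r<N j. g ((\<Sum>l<j. N l) + r))"
proof (induction m)
  case 0 then show ?case by simp
next
  case (Suc m)
  have "(\<Sum>i<(\<Sum>l<Suc m. N l). g i) = (\<Sum>i<(\<Sum>l<m. N l) + N m. g i)" by simp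
  also have "\<dots> = (\<Sum>i<(\<Sum>l<m. N l). g i) + (\<Sum>r<N m. g ((\<Sum>l<m. N l) + r))"
    by (rule sum_split_add)
  finally show ?case using Suc.IH by simp
qed

lemma sum_div_blocks:
  fixes g :: "nat \<Rightarrow> real"
  assumes "0 < c"
  shows "(\<Sum>r<c * B. g (r div c)) = real c * (\<Sum>a<B. g a)"
proof (induction B)
  case 0 then show ?case by simp
next
  case (Suc B)
  have "(\<Sum>r<c * Suc B. g (r div c)) = (\<Sum>r<c * B + c. g (r div c))" by (simp add: add.commute)
  also have "\<dots> = (\<Sum>r<c * B. g (r div c)) + (\<Sum>r<c. g ((c * B + r) div c))"
    by (rule sum_split_add)
  also have "(\<Sum>r<c. g ((c * B + r) div c)) = (\<Sum>r<c. g B)"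
    by (rule sum.cong) (use assms in auto)
  finally show ?case using Suc.IH by (simp add: algebra_simps)
qed

lemma gauss_real: "(\<Sum>a<B. real a) = real B * (real B - 1) / 2"
  by (induction B) (auto simp: field_simps)


definition cc :: "nat \<Rightarrow> nat \<Rightarrow> nat" where "cc k j = (if j = 0 then 2^k else 2^(k+1-j) - 1)"
definition wt :: "nat \<Rightarrow> nat \<Rightarrow> real" where "wt k j = (if j = 0 then 1/2^k else 1/2^(k+1-j))"
definition dl :: "nat \<Rightarrow> real" where "dl k = 1/(real k * 4^(k+1))"
definition sz :: "nat \<Rightarrow> nat \<Rightarrow> real" where "sz k j = (if j = 0 then 1/2^k - real k * dl k else wt k j + dl k)"
definition PP :: "nat \<Rightarrow> (nat \<Rightarrow> nat) \<Rightarrow> nat \<Rightarrow> nat" where "PP k B j = (\<Sum>l<j. cc k l * B l)"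
definition nn :: "nat \<Rightarrow> (nat \<Rightarrow> nat) \<Rightarrow> nat" where "nn k B = PP k B (k+1)"
definition ityp :: "nat \<Rightarrow> (nat \<Rightarrow> nat) \<Rightarrow> nat \<Rightarrow> nat" where
  "ityp k B i = (THE j. j \<le> k \<and> PP k B j \<le> i \<and> i < PP k B (Suc j))"
definition idx :: "nat \<Rightarrow> (nat \<Rightarrow> nat) \<Rightarrow> nat \<Rightarrow> nat" where "idx k B i = i - PP k B (ityp k B i)"
definition Mb :: "(nat \<Rightarrow> nat) \<Rightarrow> nat \<Rightarrow> nat" where "Mb B j = (\<Sum>l<j. B l)"
definition bkb :: "nat \<Rightarrow> (nat \<Rightarrow> nat) \<Rightarrow> nat \<Rightarrow> nat" where
  "bkb k B i = 1 + Mb B (ityp k B i) + idx k B i div cc k (ityp k B i)"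
definition bopt :: "nat \<Rightarrow> (nat \<Rightarrow> nat) \<Rightarrow> nat \<Rightarrow> nat" where "bopt k B i = 1 + idx k B i"
definition ss :: "nat \<Rightarrow> (nat \<Rightarrow> nat) \<Rightarrow> nat \<Rightarrow> real" where "ss k B i = sz k (ityp k B i)"
definition ww :: "nat \<Rightarrow> (nat \<Rightarrow> nat) \<Rightarrow> nat \<Rightarrow> real" where "ww k B i = wt k (ityp k B i)"

lemma four_pow: "(4::real)^n = 2^n * 2^n"
  by (metis mult_2 numeral_Bit0 power_mult_distrib)

context fixes k :: nat and B :: "nat \<Rightarrow> nat" assumes k1: "1 \<le> k"
begin

lemma cc_pos: "j \<le> k \<Longrightarrow> 0 < cc k j"
proof -
  assume "j \<le> k"
  then have "2 \<le> (2::nat)^(k+1-j)"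
  proof -
    assume "j \<le> k"
    have "(2::nat)^1 \<le> 2^(k+1-j)" by (rule power_increasing) (use \<open>j \<le> k\<close> in auto)
    then show ?thesis by simp
  qed
  then show ?thesis by (simp add: cc_def)
qed

lemma kdl: "real k * dl k = 1/4^(k+1)"
  using k1 by (simp add: dl_def)

lemma dl_pos: "0 < dl k" using k1 by (simp add: dl_def)

lemma dl_le: "dl k \<le> 1/4^(k+1)"
proof -
  have "dl k \<le> real k * dl k" using k1 dl_pos by (simp add: mult_le_cancel_right1)
  then show ?thesis using kdl by simp
qed

lemma PP_Suc: "PP k B (Suc j) = PP k B j + cc k j * B j" by (simp add: PP_def)

lemma typ_eq: assumes "j \<le> k" "PP k B j \<le> i" "i < PP k B (Suc j)" shows "ityp k B i = j"
  unfolding ityp_def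
proof (rule the_equality)
  show "j \<le> k \<and> PP k B j \<le> i \<and> i < PP k B (Suc j)" using assms by simp
next
  fix j' assume "j' \<le> k \<and> PP k B j' \<le> i \<and> i < PP k B (Suc j')"
  then show "j' = j" using prefix_unique[of "\<lambda>l. cc k l * B l" j' i j] assms unfolding PP_def by auto
qed

lemma typ_prop: assumes "i < nn k B"
  shows "ityp k B i \<le> k \<and> PP k B (ityp k B i) \<le> i \<and> i < PP k B (Suc (ityp k B i))"
proof -
  obtain j where "j < k+1" "PP k B j \<le> i" "i < PP k B (Suc j)"
    using prefix_locate[of i "\<lambda>l. cc k l * B l" "k+1"] assms unfolding nn_def PP_def by auto
  moreover then have "ityp k B i = j" by (intro typ_eq) auto
  ultimately show ?thesis by auto
qed

lemma idx_prop: assumes "i < nn k B"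
  shows "idx k B i < cc k (ityp k B i) * B (ityp k B i)" "i = PP k B (ityp k B i) + idx k B i"
  using typ_prop[OF assms] by (auto simp: idx_def PP_Suc)

lemma typ_blk: assumes "j \<le> k" "r < cc k j * B j"
  shows "ityp k B (PP k B j + r) = j" "idx k B (PP k B j + r) = r"
proof -
  show t: "ityp k B (PP k B j + r) = j" by (rule typ_eq) (use assms in \<open>auto simp: PP_Suc\<close>)
  show "idx k B (PP k B j + r) = r" by (simp add: idx_def t)
qed

lemma PP_le_nn: "j \<le> k \<Longrightarrow> PP k B (Suc j) \<le> nn k B"
  unfolding nn_def PP_def by (rule prefix_mono) simp

lemma sum_items: "(\<Sum>i<nn k B. g i) = (\<Sum>j<k+1. \<Sum>r<cc k j * B j. g (PP k B j + r))"
  for g :: "nat \<Rightarrow> real"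
  unfolding nn_def PP_def by (rule sum_prefix_blocks)

lemma kb_cost: "cost (nn k B) (ww k B) (bkb k B) =
   (\<Sum>j<k+1. wt k j * real (cc k j) * (real (B j) * (1 + real (Mb B j)) + real (B j) * (real (B j) - 1) / 2))"
proof -
  have "cost (nn k B) (ww k B) (bkb k B) = (\<Sum>j<k+1. \<Sum>r<cc k j * B j. real (bkb k B (PP k B j + r)) * ww k B (PP k B j + r))"
    unfolding cost_sum by (rule sum_items)
  also have "\<dots> = (\<Sum>j<k+1. \<Sum>r<cc k j * B j. wt k j * (1 + real (Mb B j) + real (r div cc k j)))"
    by (rule sum.cong, simp, rule sum.cong, simp) (auto simp: typ_blk bkb_def ww_def)
  also have "\<dots> = (\<Sum>j<k+1. wt k j * real (cc k j) * (\<Sum>a<B j. (1 + real (Mb B j) + real a)))"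
  proof (rule sum.cong, simp)
    fix j assume "j \<in> {..<k+1}"
    then have "0 < cc k j" using cc_pos by simp
    then show "(\<Sum>r<cc k j * B j. wt k j * (1 + real (Mb B j) + real (r div cc k j))) =
       wt k j * real (cc k j) * (\<Sum>a<B j. (1 + real (Mb B j) + real a))"
      using sum_div_blocks[of "cc k j" "\<lambda>a. wt k j * (1 + real (Mb B j) + real a)" "B j"]
      by (simp add: sum_distrib_left mult_ac)
  qed
  also have "\<dots> = (\<Sum>j<k+1. wt k j * real (cc k j) * (real (B j) * (1 + real (Mb B j)) + real (B j) * (real (B j) - 1) / 2))"
    by (simp add: sum.distrib gauss_real)
  finally show ?thesis .
qed

lemma opt_cost: "cost (nn k B) (ww k B) (bopt k B) =
   (\<Sum>j<k+1. wt k j * (real (cc k j * B j) + real (cc k j * B j) * (real (cc k j * B j) - 1) / 2))"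
proof -
  have "cost (nn k B) (ww k B) (bopt k B) = (\<Sum>j<k+1. \<Sum>r<cc k j * B j. real (bopt k B (PP k B j + r)) * ww k B (PP k B j + r))"
    unfolding cost_sum by (rule sum_items)
  also have "\<dots> = (\<Sum>j<k+1. \<Sum>r<cc k j * B j. wt k j * (1 + real r))"
    by (rule sum.cong, simp, rule sum.cong, simp) (auto simp: typ_blk bopt_def ww_def)
  also have "\<dots> = (\<Sum>j<k+1. wt k j * (real (cc k j * B j) + real (cc k j * B j) * (real (cc k j * B j) - 1) / 2))"
    by (simp add: sum_distrib_left[symmetric] sum.distrib gauss_real)
  finally show ?thesis .
qed

end

context fixes k :: nat assumes k1: "1 \<le> k"
begin

lemma wt_pos: "0 < wt k j" by (simp add: wt_def)

lemma wt_pow: assumes "1 \<le> j" "j \<le> l" "l \<le> k"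
  shows "wt k l = real (2^(l-j)) / 2^(k+1-j)"
proof -
  have e: "k+1-j = (k+1-l) + (l-j)" using assms by auto
  have "(2::real)^(k+1-j) = 2^(k+1-l) * 2^(l-j)" by (subst e, subst power_add) simp
  then show ?thesis using assms by (simp add: wt_def)
qed

lemma wt_pow0: assumes "l \<le> k"
  shows "wt k l = real (2^(l-1)) / 2^k"
proof (cases "l = 0")
  case True then show ?thesis by (simp add: wt_def)
next
  case False
  have e: "k = (k+1-l) + (l-1)" using assms False by auto
  have "(2::real)^k = 2^(k+1-l) * 2^(l-1)" by (subst e, subst power_add) simp
  then show ?thesis using False by (simp add: wt_def)
qed

lemma key_pos:
  fixes S :: "'a set" and \<tau> :: "'a \<Rightarrow> nat"
  assumes j: "1 \<le> j" "j \<le> k" and fin: "finite S" and \<tau>: "\<forall>i\<in>S. j \<le> \<tau> i \<and> \<tau> i \<le> k"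
    and s: "(\<Sum>i\<in>S. sz k (\<tau> i)) \<le> 1"
  shows "(\<Sum>i\<in>S. wt k (\<tau> i)) \<le> real (cc k j) * wt k j"
proof (cases "S = {}")
  case True then show ?thesis by (simp add: wt_def)
next
  case False
  define m where "m = k+1-j"
  define Z where "Z = (\<Sum>i\<in>S. (2::nat)^(\<tau> i - j))"
  have W: "(\<Sum>i\<in>S. wt k (\<tau> i)) = real Z / 2^m"
    unfolding Z_def m_def of_nat_sum sum_divide_distrib
    by (rule sum.cong) (use \<tau> wt_pow j in auto)
  have sz_eq: "\<And>i. i \<in> S \<Longrightarrow> sz k (\<tau> i) = wt k (\<tau> i) + dl k"
    using \<tau> j by (auto simp: sz_def)
  have "(\<Sum>i\<in>S. sz k (\<tau> i)) = (\<Sum>i\<in>S. wt k (\<tau> i)) + real (card S) * dl k"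
    by (simp add: sz_eq sum.distrib)
  moreover have "0 < real (card S) * dl k" using False fin dl_pos[OF k1] by (simp add: card_gt_0_iff)
  ultimately have "(\<Sum>i\<in>S. wt k (\<tau> i)) < 1" using s by linarith
  then have "real Z < 2^m" using W by (simp add: divide_less_eq)
  then have "Z < 2^m" by (metis of_nat_less_iff of_nat_numeral of_nat_power)
  then have "Z + 1 \<le> 2^m" by simp
  then have "real (Z + 1) \<le> real (2^m)" by (simp only: of_nat_le_iff)
  then have "real Z \<le> 2^m - 1" by simp
  then have "(\<Sum>i\<in>S. wt k (\<tau> i)) \<le> (2^m - 1) / 2^m" unfolding W
    by (simp add: divide_right_mono)
  also have "\<dots> = real (cc k j) * wt k j"
  proof -
    have "1 \<le> (2::nat)^m" by simp
    then have "real ((2::nat)^m - 1) = 2^m - 1" by (simp add: of_nat_diff)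
    then show ?thesis using j by (simp add: cc_def wt_def m_def)
  qed
  finally show ?thesis .
qed

lemma pow_facts: "(1::real)/4^(k+1) \<le> 1/2^(k+1)" "(2::real)^(k+1) / 4^(k+1) = 1/2^(k+1)"
    "(1::real)/2^(k+1) < 1/2^k" "(1::real)/2^k - 1/2^(k+1) = 1/2^(k+1)"
proof -
  have "(2::real)^(k+1) \<le> 4^(k+1)" by (rule power_mono) auto
  then show "(1::real)/4^(k+1) \<le> 1/2^(k+1)" by (simp add: frac_le)
  show "(2::real)^(k+1) / 4^(k+1) = 1/2^(k+1)" by (simp add: four_pow)
  show "(1::real)/2^(k+1) < 1/2^k" by (simp add: field_simps)
  show "(1::real)/2^k - 1/2^(k+1) = 1/2^(k+1)" by (simp add: field_simps)
qed

lemma key_zero: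
  fixes S :: "'a set" and \<tau> :: "'a \<Rightarrow> nat"
  assumes fin: "finite S" and \<tau>: "\<forall>i\<in>S. \<tau> i \<le> k"
    and s: "(\<Sum>i\<in>S. sz k (\<tau> i)) \<le> 1"
  shows "(\<Sum>i\<in>S. wt k (\<tau> i)) \<le> 1"
proof -
  define Z where "Z = (\<Sum>i\<in>S. (2::nat)^(\<tau> i - 1))"
  have W: "(\<Sum>i\<in>S. wt k (\<tau> i)) = real Z / 2^k"
    unfolding Z_def of_nat_sum sum_divide_distrib
    by (rule sum.cong) (use \<tau> wt_pow0 in auto)
  have sz1: "\<And>i. i \<in> S \<Longrightarrow> wt k (\<tau> i) - 1/4^(k+1) \<le> sz k (\<tau> i)"
  proof -
    have "(0::real) \<le> 1/(4*4^k)" by simp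
    then show "\<And>i. i \<in> S \<Longrightarrow> wt k (\<tau> i) - 1/4^(k+1) \<le> sz k (\<tau> i)"
      using kdl[OF k1] dl_pos[OF k1] apply (auto simp: sz_def wt_def)
      by (smt (verit) divide_nonneg_nonneg zero_le_power zero_le_numeral mult_nonneg_nonneg)
  qed
  have sz2: "\<And>i. i \<in> S \<Longrightarrow> 1/2^(k+1) \<le> sz k (\<tau> i)"
  proof -
    fix i assume i: "i \<in> S"
    show "1/2^(k+1) \<le> sz k (\<tau> i)"
    proof (cases "\<tau> i = 0")
      case True then show ?thesis using kdl[OF k1] pow_facts by (simp add: sz_def)
    next
      case False
      have "(2::real)^(k+1-\<tau> i) \<le> 2^(k+1)" by (rule power_increasing) auto
      then have "1/2^(k+1) \<le> wt k (\<tau> i)" using False by (simp add: wt_def frac_le)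
      then show ?thesis using False dl_pos[OF k1] by (simp add: sz_def)
    qed
  qed
  have "real (card S) * (1/2^(k+1)) \<le> (\<Sum>i\<in>S. sz k (\<tau> i))"
    using sum_mono[of S "\<lambda>i. 1/2^(k+1)" "\<lambda>i. sz k (\<tau> i)"] sz2 by simp
  then have "real (card S) \<le> 2^(k+1) * (\<Sum>i\<in>S. sz k (\<tau> i))" by (simp add: field_simps)
  also have "\<dots> \<le> 2^(k+1) * 1" by (rule mult_left_mono[OF s]) simp
  finally have c: "real (card S) \<le> 2^(k+1)" by simp
  have "(\<Sum>i\<in>S. wt k (\<tau> i)) - real (card S) * (1/4^(k+1)) \<le> (\<Sum>i\<in>S. sz k (\<tau> i))"
    using sum_mono[of S "\<lambda>i. wt k (\<tau> i) - 1/4^(k+1)" "\<lambda>i. sz k (\<tau> i)"] sz1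
    by (simp add: sum_subtractf)
  moreover have "real (card S) * (1/4^(k+1)) \<le> 2^(k+1) * (1/4^(k+1))"
    using c by (intro mult_right_mono) auto
  ultimately have "(\<Sum>i\<in>S. wt k (\<tau> i)) \<le> 1 + 1/2^(k+1)" using s pow_facts(2) by simp
  then have "real Z / 2^k < 1 + 1/2^k" using W pow_facts(3) by linarith
  then have "real Z < 2^k + 1" by (simp add: field_simps)
  then have "real Z < real (2^k + 1)" by simp
  then have "Z < 2^k + 1" by (simp only: of_nat_less_iff)
  then have "Z \<le> 2^k" by simp
  then have "real Z \<le> real (2^k)" by (simp only: of_nat_le_iff)
  then show ?thesis unfolding W by simp
qed

end

lemma geom_half: "(\<Sum>j<k. (1::real)/2^(k-j)) = 1 - 1/2^k"
proof (induction k)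
  case 0 then show ?case by simp
next
  case (Suc k)
  have "(\<Sum>j<Suc k. (1::real)/2^(Suc k-j)) = (\<Sum>j<k. (1/2) * (1/2^(k-j))) + 1/2"
    by (simp add: Suc_diff_le)
  also have "\<dots> = (1/2) * (\<Sum>j<k. 1/2^(k-j)) + 1/2" by (simp only: sum_distrib_left[symmetric])
  also have "\<dots> = (1/2) * (1 - 1/2^k) + 1/2" by (simp only: Suc.IH)
  finally show ?case by (simp add: field_simps)
qed

context fixes k :: nat and B :: "nat \<Rightarrow> nat" assumes k1: "1 \<le> k"
begin

lemma sz_bounds: "j \<le> k \<Longrightarrow> 0 < sz k j \<and> sz k j \<le> 1"
proof -
  assume j: "j \<le> k"
  show ?thesis
  proof (cases "j = 0")
    case True
    have "1/4^(k+1) < (1::real)/2^k" using pow_facts[OF k1] by linarith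
    moreover have a: "sz k 0 = 1/2^k - 1/4^(k+1)" using kdl[OF k1] by (simp add: sz_def)
    moreover have "(1::real)/2^k \<le> 1" by simp
    moreover have "0 < (1::real)/4^(k+1)" by simp
    ultimately have "0 < sz k 0 \<and> sz k 0 \<le> 1" by linarith
    then show ?thesis using True by simp
  next
    case False
    have "(2::real)^1 \<le> 2^(k+1-j)" by (rule power_increasing) (use j in auto)
    then have "wt k j \<le> 1/2" using False by (simp add: wt_def frac_le)
    moreover have "dl k \<le> 1/2"
    proof -
      have "(2::real)^1 \<le> 4^(k+1)" by (rule order.trans[of _ "4^1"]) (auto intro: power_increasing)
      then have "(1::real)/4^(k+1) \<le> 1/2" by (intro divide_left_mono) auto
      then show ?thesis using dl_le[OF k1] by linarith
    qed
    moreover have "0 < wt k j" by (rule wt_pos[OF k1])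
    ultimately show ?thesis using False dl_pos[OF k1] by (simp add: sz_def)
  qed
qed

lemma sum_sz: "(\<Sum>j<k+1. sz k j) = 1"
proof -
  have "(\<Sum>j<Suc k. sz k j) = sz k 0 + (\<Sum>j<k. sz k (Suc j))" by (rule sum.lessThan_Suc_shift)
  then have "(\<Sum>j<k+1. sz k j) = sz k 0 + (\<Sum>j<k. sz k (Suc j))" by simp
  also have "(\<Sum>j<k. sz k (Suc j)) = (\<Sum>j<k. 1/2^(k-j)) + real k * dl k"
    by (simp add: sz_def wt_def sum.distrib)
  finally show ?thesis by (simp add: geom_half sz_def)
qed

lemma valid: "valid_instance (nn k B) (ss k B) (ww k B)"
  unfolding valid_instance_def ss_def ww_def using typ_prop[OF k1] sz_bounds wt_pos[OF k1] by blast

lemma opt_feasible: "feasible (nn k B) (ss k B) (bopt k B)"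
  unfolding feasible_def
proof (intro conjI allI impI)
  fix i show "1 \<le> bopt k B i" by (simp add: bopt_def)
next
  fix q
  let ?S = "bin (nn k B) (bopt k B) q"
  have inj: "inj_on (ityp k B) ?S"
  proof (rule inj_onI)
    fix i i' assume "i \<in> ?S" "i' \<in> ?S" "ityp k B i = ityp k B i'"
    then show "i = i'" using idx_prop(2)[OF k1, of i B] idx_prop(2)[OF k1, of i' B]
      by (auto simp: bin_def bopt_def)
  qed
  have sub: "ityp k B ` ?S \<subseteq> {..<k+1}" using typ_prop[OF k1] by (auto simp: bin_def less_Suc_eq_le)
  have "(\<Sum>i\<in>?S. ss k B i) = (\<Sum>j\<in>ityp k B ` ?S. sz k j)"
    unfolding ss_def by (rule sum.reindex[OF inj, symmetric, unfolded comp_def])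
  also have "\<dots> \<le> (\<Sum>j<k+1. sz k j)"
    by (rule sum_mono2[OF _ sub]) (use sz_bounds in \<open>auto simp: less_imp_le\<close>)
  finally show "(\<Sum>i\<in>?S. ss k B i) \<le> 1" using sum_sz by simp
qed

end

context fixes k :: nat and B :: "nat \<Rightarrow> nat" assumes k1: "1 \<le> k"
begin

lemma Mb_Suc: "Mb B (Suc j) = Mb B j + B j" by (simp add: Mb_def)

lemma bkb_bounds: assumes "i < nn k B"
  shows "1 + Mb B (ityp k B i) \<le> bkb k B i" "bkb k B i \<le> Mb B (Suc (ityp k B i))"
proof -
  have "idx k B i < B (ityp k B i) * cc k (ityp k B i)" using idx_prop(1)[OF k1 assms] by (simp add: mult.commute)
  then have "idx k B i div cc k (ityp k B i) < B (ityp k B i)" by (rule less_mult_imp_div_less)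
  then show "1 + Mb B (ityp k B i) \<le> bkb k B i" "bkb k B i \<le> Mb B (Suc (ityp k B i))"
    by (auto simp: bkb_def Mb_Suc)
qed

lemma cc_wt0: "real (cc k 0) * wt k 0 = 1" by (simp add: cc_def wt_def)

lemma cc_sz: assumes "j \<le> k" shows "real (cc k j) * sz k j \<le> 1"
proof (cases "j = 0")
  case True
  have "0 \<le> real (cc k 0) * (real k * dl k)" using kdl[OF k1] by simp
  moreover have "real (cc k 0) * sz k 0 = real (cc k 0) * wt k 0 - real (cc k 0) * (real k * dl k)"
    by (simp add: sz_def wt_def right_diff_distrib)
  ultimately have "real (cc k 0) * sz k 0 \<le> 1" using cc_wt0 by linarith
  then show ?thesis using True by simp
next
  case False
  define m where "m = k+1-j"
  have m1: "1 \<le> m" "m \<le> k" using False assms by (auto simp: m_def)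
  have cm: "real (cc k j) = 2^m - 1"
  proof -
    have "1 \<le> (2::nat)^m" by simp
    then show ?thesis using False by (simp add: cc_def m_def of_nat_diff)
  qed
  have wm: "wt k j = 1/2^m" using False by (simp add: wt_def m_def)
  have pm: "(2::real)^m \<le> 2^k" by (rule power_increasing) (use m1 in auto)
  have "(2::real)^m * 2^m \<le> 2^k * 2^k" using pm by (intro mult_mono) auto
  also have "\<dots> \<le> 4^(k+1)" by (simp add: four_pow)
  finally have pp: "(2::real)^m * 2^m \<le> 4^(k+1)" .
  have "(2^m - 1) * dl k \<le> 2^m * dl k" using dl_pos[OF k1] by (simp add: mult_right_mono)
  also have "\<dots> \<le> 2^m * (1/4^(k+1))" using dl_le[OF k1] by (intro mult_left_mono) auto
  also have "\<dots> \<le> 2^m * (1/(2^m*2^m))" using pp by (intro mult_left_mono divide_left_mono) auto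
  also have "\<dots> = 1/2^m" by simp
  finally have d: "(2^m - 1) * dl k \<le> 1/2^m" .
  have "real (cc k j) * sz k j = (2^m - 1) * (1/2^m) + (2^m - 1) * dl k"
    using False by (simp add: sz_def cm wm distrib_left)
  also have "(2^m - 1) * (1/2^m) = 1 - (1::real)/2^m" by (simp add: field_simps)
  finally show ?thesis using d by linarith
qed

lemma bin_char:
  assumes j: "j \<le> k" and q1: "1 \<le> q" and jl: "Mb B j \<le> q - 1" and ju: "q - 1 < Mb B (Suc j)"
  shows "bin (nn k B) (bkb k B) q = (\<lambda>r. PP k B j + cc k j * (q - 1 - Mb B j) + r) ` {..<cc k j}"
proof -
  define a where "a = q - 1 - Mb B j"
  define c where "c = cc k j"
  have c0: "0 < c" using cc_pos[OF k1 j] by (simp add: c_def)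
  have aB: "a < B j" using jl ju by (simp add: a_def Mb_Suc)
  show ?thesis unfolding a_def[symmetric] c_def[symmetric]
  proof (intro equalityI subsetI)
    fix i assume "i \<in> bin (nn k B) (bkb k B) q"
    then have i: "i < nn k B" and bq: "bkb k B i = q" by (auto simp: bin_def)
    define t where "t = ityp k B i"
    define r where "r = idx k B i"
    have tk: "t \<le> k" using typ_prop[OF k1 i] by (simp add: t_def)
    have rl: "r < B t * cc k t" using idx_prop(1)[OF k1 i] by (simp add: t_def r_def mult.commute)
    then have dl': "r div cc k t < B t" by (rule less_mult_imp_div_less)
    have qe: "q - 1 = Mb B t + r div cc k t" using bq by (simp add: bkb_def t_def r_def)
    have "t = j"
      using prefix_unique[of B t "q-1" j] qe dl' jl ju by (simp add: Mb_def)
    then have da: "r div c = a" using qe by (simp add: a_def c_def)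
    have ie: "i = PP k B j + r" using idx_prop(2)[OF k1 i] \<open>t = j\<close> by (simp add: t_def r_def)
    have "r = c * a + r mod c" using div_mult_mod_eq[of r c] da by (simp add: mult.commute)
    then have "i = PP k B j + c * a + r mod c" using ie by simp
    moreover have "r mod c \<in> {..<c}" using c0 by simp
    ultimately show "i \<in> (\<lambda>r. PP k B j + c * a + r) ` {..<c}" by blast
  next
    fix i assume "i \<in> (\<lambda>r. PP k B j + c * a + r) ` {..<c}"
    then obtain r where r: "r < c" and ie: "i = PP k B j + (c * a + r)" by auto
    have "c * a + r < c * a + c" using r by simp
    also have "\<dots> = c * (a + 1)" by simp
    also have "\<dots> \<le> c * B j" using aB by (intro mult_left_mono) auto
    finally have lt: "c * a + r < cc k j * B j" by (simp add: c_def)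
    have t: "ityp k B i = j" "idx k B i = c * a + r" using typ_blk[where B=B, OF k1 j lt] ie by auto
    have "(c * a + r) div c = a" using r c0 by simp
    then have "bkb k B i = q" using t q1 jl by (simp add: bkb_def a_def c_def)
    moreover have "i < nn k B"
      using ie lt PP_le_nn[where B=B, OF k1 j] PP_Suc[OF k1, of B j] by simp
    ultimately show "i \<in> bin (nn k B) (bkb k B) q" by (simp add: bin_def)
  qed
qed

lemma kb_output: "KB_output (nn k B) (ss k B) (ww k B) (bkb k B)"
  unfolding KB_output_def
proof (rule conjI)
  show "\<forall>i<nn k B. 1 \<le> bkb k B i" by (simp add: bkb_def)
next
  show "\<forall>q\<ge>1. (\<Sum>i\<in>bin (nn k B) (bkb k B) q. ss k B i) \<le> 1 \<and>
    (\<forall>S. S \<subseteq> {i. i < nn k B \<and> q \<le> bkb k B i} \<longrightarrow> (\<Sum>i\<in>S. ss k B i) \<le> 1 \<longrightarrow>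
         (\<Sum>i\<in>S. ww k B i) \<le> (\<Sum>i\<in>bin (nn k B) (bkb k B) q. ww k B i))"
  proof (intro allI impI)
  fix q :: nat assume q1: "1 \<le> q"
  show "(\<Sum>i\<in>bin (nn k B) (bkb k B) q. ss k B i) \<le> 1 \<and>
    (\<forall>S. S \<subseteq> {i. i < nn k B \<and> q \<le> bkb k B i} \<longrightarrow> (\<Sum>i\<in>S. ss k B i) \<le> 1 \<longrightarrow>
         (\<Sum>i\<in>S. ww k B i) \<le> (\<Sum>i\<in>bin (nn k B) (bkb k B) q. ww k B i))"
  proof (cases "q - 1 < Mb B (k+1)")
    case True
    obtain j where j: "j < k+1" "Mb B j \<le> q - 1" "q - 1 < Mb B (Suc j)"
      using prefix_locate[of "q-1" B "k+1"] True unfolding Mb_def by auto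
    have jk: "j \<le> k" using j by simp
    define c where "c = cc k j"
    define f where "f = (\<lambda>r. PP k B j + cc k j * (q - 1 - Mb B j) + r)"
    have binq: "bin (nn k B) (bkb k B) q = f ` {..<c}"
      unfolding f_def c_def by (rule bin_char[OF jk q1 j(2,3)])
    have inj: "inj_on f {..<c}" by (rule inj_onI) (simp add: f_def)
    have aB: "q - 1 - Mb B j < B j" using j by (simp add: Mb_Suc)
    have ft: "\<And>r. r < c \<Longrightarrow> ityp k B (f r) = j"
    proof -
      fix r assume r: "r < c"
      have "cc k j * (q - 1 - Mb B j) + r < cc k j * (q - 1 - Mb B j) + cc k j" using r by (simp add: c_def)
      also have "\<dots> = cc k j * (q - 1 - Mb B j + 1)" by simp
      also have "\<dots> \<le> cc k j * B j" using aB by (intro mult_left_mono) auto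
      finally have "cc k j * (q - 1 - Mb B j) + r < cc k j * B j" .
      from typ_blk[where B=B, OF k1 jk this] show "ityp k B (f r) = j" by (simp add: f_def add.assoc)
    qed
    have sbin: "(\<Sum>i\<in>bin (nn k B) (bkb k B) q. ss k B i) = real c * sz k j"
      unfolding binq sum.reindex[OF inj] by (simp add: ss_def ft)
    have wbin: "(\<Sum>i\<in>bin (nn k B) (bkb k B) q. ww k B i) = real c * wt k j"
      unfolding binq sum.reindex[OF inj] by (simp add: ww_def ft)
    show ?thesis
    proof (intro conjI allI impI)
      show "(\<Sum>i\<in>bin (nn k B) (bkb k B) q. ss k B i) \<le> 1" using sbin cc_sz[OF jk] by (simp add: c_def)
    next
      fix S assume S: "S \<subseteq> {i. i < nn k B \<and> q \<le> bkb k B i}" and sS: "(\<Sum>i\<in>S. ss k B i) \<le> 1"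
      have fin: "finite S" using S by (rule finite_subset) auto
      have tS: "\<forall>i\<in>S. j \<le> ityp k B i \<and> ityp k B i \<le> k"
      proof
        fix i assume "i \<in> S"
        then have i: "i < nn k B" "q \<le> bkb k B i" using S by auto
        have tk: "ityp k B i \<le> k" using typ_prop[OF k1 i(1)] by simp
        have "j \<le> ityp k B i"
        proof (rule ccontr)
          assume "\<not> j \<le> ityp k B i"
          then have "Suc (ityp k B i) \<le> j" by simp
          then have "Mb B (Suc (ityp k B i)) \<le> Mb B j" unfolding Mb_def by (rule prefix_mono)
          then show False using bkb_bounds(2)[OF i(1)] i(2) j(2) q1 by linarith
        qed
        then show "j \<le> ityp k B i \<and> ityp k B i \<le> k" using tk by simp
      qed
      have sS': "(\<Sum>i\<in>S. sz k (ityp k B i)) \<le> 1" using sS by (simp add: ss_def)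
      have "(\<Sum>i\<in>S. wt k (ityp k B i)) \<le> real (cc k j) * wt k j"
      proof (cases "j = 0")
        case True
        have "(\<Sum>i\<in>S. wt k (ityp k B i)) \<le> 1" by (rule key_zero[OF k1 fin _ sS']) (use tS in auto)
        then show ?thesis using True cc_wt0 by simp
      next
        case False
        show ?thesis by (rule key_pos[OF k1 _ jk fin tS sS']) (use False in auto)
      qed
      then show "(\<Sum>i\<in>S. ww k B i) \<le> (\<Sum>i\<in>bin (nn k B) (bkb k B) q. ww k B i)"
        unfolding wbin c_def by (simp add: ww_def)
    qed
  next
    case False
    have none: "\<And>i. i < nn k B \<Longrightarrow> bkb k B i < q"
    proof -
      fix i assume i: "i < nn k B"
      have "Suc (ityp k B i) \<le> k+1" using typ_prop[OF k1 i] by simp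
      then have "Mb B (Suc (ityp k B i)) \<le> Mb B (k+1)" unfolding Mb_def by (rule prefix_mono)
      then show "bkb k B i < q" using bkb_bounds(2)[OF i] False q1 by linarith
    qed
    have e1: "bin (nn k B) (bkb k B) q = {}" using none by (auto simp: bin_def)
    have e2: "{i. i < nn k B \<and> q \<le> bkb k B i} = {}" using none by (auto simp: not_le[symmetric])
    show ?thesis unfolding e1 e2 by simp
  qed
  qed
qed

end

lemma floor_lim:
  fixes a :: real assumes a: "0 \<le> a"
  shows "(\<lambda>t. real (nat \<lfloor>real t * a\<rfloor>) / real t) \<longlonglongrightarrow> a"
proof (rule tendsto_sandwich[where f = "\<lambda>t. a - 1 / real t" and h = "\<lambda>t. a"])
  show "\<forall>\<^sub>F t in sequentially. a - 1 / real t \<le> real (nat \<lfloor>real t * a\<rfloor>) / real t"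
    using eventually_ge_at_top[of "1::nat"]
  proof eventually_elim
    case (elim t)
    have t: "0 < real t" using elim by simp
    have "0 \<le> \<lfloor>real t * a\<rfloor>" using a by simp
    then have e: "real (nat \<lfloor>real t * a\<rfloor>) = real_of_int \<lfloor>real t * a\<rfloor>" by simp
    have "real t * a - 1 \<le> real_of_int \<lfloor>real t * a\<rfloor>" by linarith
    then have "(real t * a - 1) / real t \<le> real_of_int \<lfloor>real t * a\<rfloor> / real t"
      using t by (intro divide_right_mono) auto
    moreover have "(real t * a - 1) / real t = a - 1 / real t" using t by (simp add: field_simps)
    ultimately show ?case unfolding e by simp
  qed
  show "\<forall>\<^sub>F t in sequentially. real (nat \<lfloor>real t * a\<rfloor>) / real t \<le> a"
    using eventually_ge_at_top[of "1::nat"]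
  proof eventually_elim
    case (elim t)
    have t: "0 < real t" using elim by simp
    have "0 \<le> \<lfloor>real t * a\<rfloor>" using a by simp
    then have e: "real (nat \<lfloor>real t * a\<rfloor>) = real_of_int \<lfloor>real t * a\<rfloor>" by simp
    have "real_of_int \<lfloor>real t * a\<rfloor> \<le> real t * a" by linarith
    then show ?case unfolding e using t by (simp add: field_simps)
  qed
  show "(\<lambda>t. a - 1 / real t) \<longlonglongrightarrow> a" using tendsto_diff[OF tendsto_const lim_inverse_n', of a] by simp
qed simp

lemma div_div_same: "(y::real) \<noteq> 0 \<Longrightarrow> (a/y)/(b/y) = a/b"
  by (cases "b = 0") (simp_all add: field_simps)

lemma abel:
  fixes \<rho> Z :: "nat \<Rightarrow> real"
  shows "(\<Sum>j<n. \<rho> j * (Z (Suc j) - Z j)) = (\<Sum>j<n. (\<rho> j - \<rho> (Suc j)) * Z (Suc j)) + \<rho> n * Z n - \<rho> 0 * Z 0"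
  by (induction n) (auto simp: algebra_simps)

definition Bt :: "nat \<Rightarrow> (nat \<Rightarrow> real) \<Rightarrow> nat \<Rightarrow> nat \<Rightarrow> nat" where
  "Bt k X t j = nat \<lfloor>real t * (X j / real (cc k j))\<rfloor>"

lemma ratio_lim:
  assumes k1: "1 \<le> k" and X: "\<And>j. j \<le> k \<Longrightarrow> 0 < X j"
  defines "a \<equiv> \<lambda>j. X j / real (cc k j)"
  shows "(\<lambda>t. cost (nn k (Bt k X t)) (ww k (Bt k X t)) (bkb k (Bt k X t)) /
             cost (nn k (Bt k X t)) (ww k (Bt k X t)) (bopt k (Bt k X t)))
     \<longlonglongrightarrow> (\<Sum>j<k+1. wt k j * real (cc k j) * (a j * (\<Sum>l<j. a l) + a j * a j / 2)) /
         (\<Sum>j<k+1. wt k j * (real (cc k j) * a j) * (real (cc k j) * a j) / 2)"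
proof -
  define \<beta> where "\<beta> = (\<lambda>t j. real (Bt k X t j) / real t)"
  have blim: "\<And>j. j < k+1 \<Longrightarrow> (\<lambda>t. \<beta> t j) \<longlonglongrightarrow> a j"
  proof -
    fix j assume "j < k+1"
    then have "0 \<le> a j" using X cc_pos[OF k1, of j] unfolding a_def by (simp add: less_imp_le)
    then have "(\<lambda>t. real (nat \<lfloor>real t * a j\<rfloor>) / real t) \<longlonglongrightarrow> a j" by (rule floor_lim)
    then show "(\<lambda>t. \<beta> t j) \<longlonglongrightarrow> a j" by (simp add: \<beta>_def Bt_def a_def)
  qed
  define KB where "KB = (\<lambda>t. (\<Sum>j<k+1. wt k j * real (cc k j) * (\<beta> t j * (1 / real t + (\<Sum>l<j. \<beta> t l)) + \<beta> t j * (\<beta> t j - 1 / real t) / 2)))"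
  define OP where "OP = (\<lambda>t. (\<Sum>j<k+1. wt k j * ((real (cc k j) * \<beta> t j) * (1 / real t) + (real (cc k j) * \<beta> t j) * (real (cc k j) * \<beta> t j - 1 / real t) / 2)))"
  have KBl: "KB \<longlonglongrightarrow> (\<Sum>j<k+1. wt k j * real (cc k j) * (a j * (0 + (\<Sum>l<j. a l)) + a j * (a j - 0) / 2))"
    unfolding KB_def
    by (intro tendsto_intros blim lim_inverse_n') auto
  have OPl: "OP \<longlonglongrightarrow> (\<Sum>j<k+1. wt k j * ((real (cc k j) * a j) * 0 + (real (cc k j) * a j) * (real (cc k j) * a j - 0) / 2))"
    unfolding OP_def
    by (intro tendsto_intros blim lim_inverse_n') auto
  have OLpos: "(\<Sum>j<k+1. wt k j * (real (cc k j) * a j) * (real (cc k j) * a j) / 2) \<noteq> 0"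
  proof -
    have "0 < (\<Sum>j<k+1. wt k j * (real (cc k j) * a j) * (real (cc k j) * a j) / 2)"
    proof (rule sum_pos)
      fix j assume "j \<in> {..<k+1}"
      then have "0 < a j" using X cc_pos[OF k1, of j] unfolding a_def by simp
      moreover have "0 < real (cc k j)" using cc_pos[OF k1, of j] \<open>j \<in> {..<k+1}\<close> by simp
      ultimately show "0 < wt k j * (real (cc k j) * a j) * (real (cc k j) * a j) / 2"
        using wt_pos[OF k1, of j] by simp
    qed auto
    then show ?thesis by simp
  qed
  have lim: "(\<lambda>t. KB t / OP t) \<longlonglongrightarrow> (\<Sum>j<k+1. wt k j * real (cc k j) * (a j * (\<Sum>l<j. a l) + a j * a j / 2)) /
         (\<Sum>j<k+1. wt k j * (real (cc k j) * a j) * (real (cc k j) * a j) / 2)"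
    using tendsto_divide[OF KBl OPl] OLpos by (simp add: mult.assoc)
  show ?thesis
  proof (rule Lim_transform_eventually[OF lim])
    show "\<forall>\<^sub>F t in sequentially. KB t / OP t = cost (nn k (Bt k X t)) (ww k (Bt k X t)) (bkb k (Bt k X t)) /
             cost (nn k (Bt k X t)) (ww k (Bt k X t)) (bopt k (Bt k X t))"
      using eventually_ge_at_top[of "1::nat"]
    proof eventually_elim
      case (elim t)
      have t: "0 < real t" using elim by simp
      define B where "B = Bt k X t"
      have e1: "cost (nn k B) (ww k B) (bkb k B) / (real t)^2 = KB t"
        unfolding kb_cost[OF k1] KB_def sum_divide_distrib
      proof (rule sum.cong, simp)
        fix j assume "j \<in> {..<k+1}"
        have M: "real (Mb B j) / real t = (\<Sum>l<j. \<beta> t l)"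
          by (simp add: Mb_def \<beta>_def B_def sum_divide_distrib)
        show "wt k j * real (cc k j) * (real (B j) * (1 + real (Mb B j)) + real (B j) * (real (B j) - 1) / 2) / (real t)\<^sup>2 =
          wt k j * real (cc k j) * (\<beta> t j * (1 / real t + (\<Sum>l<j. \<beta> t l)) + \<beta> t j * (\<beta> t j - 1 / real t) / 2)"
          unfolding M[symmetric] using t by (simp add: \<beta>_def B_def field_simps power2_eq_square)
      qed
      have e2: "cost (nn k B) (ww k B) (bopt k B) / (real t)^2 = OP t"
        unfolding opt_cost[OF k1] OP_def sum_divide_distrib
        by (rule sum.cong, simp) (use t in \<open>simp add: \<beta>_def B_def field_simps power2_eq_square\<close>)
      have "KB t / OP t = (cost (nn k B) (ww k B) (bkb k B) / (real t)^2) / (cost (nn k B) (ww k B) (bopt k B) / (real t)^2)"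
        unfolding e1 e2 ..
      also have "\<dots> = cost (nn k B) (ww k B) (bkb k B) / cost (nn k B) (ww k B) (bopt k B)"
        by (rule div_div_same) (use t in simp)
      finally show ?case by (simp add: B_def)
    qed
  qed
qed


lemma sp_transpose:
  fixes A :: "real mat"
  assumes "A \<in> carrier_mat n n" "y \<in> carrier_vec n" "z \<in> carrier_vec n"
  shows "y \<bullet> (A\<^sup>T *\<^sub>v z) = (A *\<^sub>v y) \<bullet> z"
proof -
  have "y \<bullet> (A\<^sup>T *\<^sub>v z) = (A\<^sup>T *\<^sub>v z) \<bullet> y"
    by (rule comm_scalar_prod[of _ n]) (use assms in auto)
  also have "\<dots> = z \<bullet> (A *\<^sub>v y)" by (rule transpose_vec_mult_scalar[OF assms(1,2,3)])
  also have "\<dots> = (A *\<^sub>v y) \<bullet> z" by (rule comm_scalar_prod[of _ n]) (use assms in auto)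
  finally show ?thesis .
qed

lemma L_carrier: "L_mat k \<in> carrier_mat (k+1) (k+1)" by (simp add: L_mat_def)
lemma Diag_carrier: "d \<in> carrier_vec n \<Longrightarrow> Diag d \<in> carrier_mat n n" by (simp add: Diag_def)
lemma u_carrier: "u_vec k \<in> carrier_vec (k+1)" by (simp add: u_vec_def)
lemma v_carrier: "v_vec k \<in> carrier_vec (k+1)" by (simp add: v_vec_def)

lemma Diag_T: "d \<in> carrier_vec n \<Longrightarrow> (Diag d)\<^sup>T = Diag d"
  by (rule eq_matI) (auto simp: Diag_def)

lemma L_mult: "y \<in> carrier_vec (k+1) \<Longrightarrow> L_mat k *\<^sub>v y = vec (k+1) (\<lambda>i. \<Sum>j\<le>i. y $ j)"
proof (rule eq_vecI)
  fix i assume y: "y \<in> carrier_vec (k+1)" and i: "i < dim_vec (vec (k+1) (\<lambda>i. \<Sum>j\<le>i. y $ j))"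
  then have i': "i < k+1" by simp
  have "(L_mat k *\<^sub>v y) $ i = (\<Sum>j<k+1. (if j \<le> i then 1 else 0) * y $ j)"
    using i' y by (simp add: L_mat_def scalar_prod_def row_def lessThan_atLeast0)
  also have "\<dots> = (\<Sum>j\<in>{..<k+1} \<inter> {j. j \<le> i}. y $ j)"
  proof -
    have "(\<Sum>j<k+1. (if j \<le> i then 1 else 0) * y $ j) = (\<Sum>j<k+1. if j \<le> i then y $ j else 0)"
      by (rule sum.cong) auto
    also have "\<dots> = (\<Sum>j\<in>{..<k+1} \<inter> {j. j \<le> i}. y $ j)"
      by (simp add: sum.inter_restrict)
    finally show ?thesis .
  qed
  also have "{..<k+1} \<inter> {j. j \<le> i} = {..i}" using i' by auto
  finally show "(L_mat k *\<^sub>v y) $ i = vec (k+1) (\<lambda>i. \<Sum>j\<le>i. y $ j) $ i" using i' by simp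
qed (simp add: L_mat_def)

lemma Diag_mult: "y \<in> carrier_vec n \<Longrightarrow> d \<in> carrier_vec n \<Longrightarrow> Diag d *\<^sub>v y = vec n (\<lambda>i. d $ i * y $ i)"
proof (rule eq_vecI)
  fix i assume y: "y \<in> carrier_vec n" and d: "d \<in> carrier_vec n" and i: "i < dim_vec (vec n (\<lambda>i. d $ i * y $ i))"
  then have i': "i < n" by simp
  have "(Diag d *\<^sub>v y) $ i = (\<Sum>j<n. (if i = j then d $ i else 0) * y $ j)"
    using i' y d by (simp add: Diag_def scalar_prod_def row_def lessThan_atLeast0)
  also have "\<dots> = (\<Sum>j<n. (if j = i then d $ i * y $ i else 0))"
    by (rule sum.cong) auto
  also have "\<dots> = d $ i * y $ i" using i' by simp
  finally show "(Diag d *\<^sub>v y) $ i = vec n (\<lambda>i. d $ i * y $ i) $ i" using i' by simp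
qed (simp add: Diag_def)

lemma R_val_explicit:
  assumes x: "x \<in> carrier_vec (k+1)"
  shows "R_val k x = (\<Sum>i<k+1. u_vec k $ i * (\<Sum>j\<le>i. v_vec k $ j * (\<Sum>l\<le>j. x $ l))^2) /
                     (\<Sum>i<k+1. u_vec k $ i * (\<Sum>j\<le>i. x $ j)^2)"
proof -
  define n where "n = k+1"
  define L where "L = L_mat k"
  define U where "U = Diag (u_vec k)"
  define V where "V = Diag (v_vec k)"
  have L: "L \<in> carrier_mat n n" and LT: "L\<^sup>T \<in> carrier_mat n n" using L_carrier by (auto simp: L_def n_def)
  have U: "U \<in> carrier_mat n n" using Diag_carrier u_carrier by (auto simp: U_def n_def)
  have V: "V \<in> carrier_mat n n" using Diag_carrier v_carrier by (auto simp: V_def n_def)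
  have xn: "x \<in> carrier_vec n" using x by (simp add: n_def)
  define X where "X = L *\<^sub>v x"
  define Y where "Y = L *\<^sub>v (V *\<^sub>v X)"
  have X: "X \<in> carrier_vec n" using L xn by (simp add: X_def)
  have Y: "Y \<in> carrier_vec n" using L V X by (simp add: Y_def)
  have mv: "\<And>A B v. A \<in> carrier_mat n n \<Longrightarrow> B \<in> carrier_mat n n \<Longrightarrow> v \<in> carrier_vec n \<Longrightarrow> (A * B) *\<^sub>v v = A *\<^sub>v (B *\<^sub>v v)"
    by (rule assoc_mult_mat_vec) auto
  have mcn: "\<And>A B. A \<in> carrier_mat n n \<Longrightarrow> B \<in> carrier_mat n n \<Longrightarrow> A * B \<in> carrier_mat n n"
    by (rule mult_carrier_mat)
  have num: "x \<bullet> ((L\<^sup>T * V * L\<^sup>T * U * L * V * L) *\<^sub>v x) = Y \<bullet> (U *\<^sub>v Y)"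
  proof -
    have e: "(L\<^sup>T * V * L\<^sup>T * U * L * V * L) *\<^sub>v x = L\<^sup>T *\<^sub>v (V *\<^sub>v (L\<^sup>T *\<^sub>v (U *\<^sub>v Y)))"
      using L LT U V xn by (simp add: Y_def X_def mv mcn del: assoc_mult_mat)
    have "x \<bullet> (L\<^sup>T *\<^sub>v (V *\<^sub>v (L\<^sup>T *\<^sub>v (U *\<^sub>v Y)))) = X \<bullet> (V *\<^sub>v (L\<^sup>T *\<^sub>v (U *\<^sub>v Y)))"
      unfolding X_def by (rule sp_transpose[OF L xn]) (use LT U V Y in auto)
    also have "\<dots> = X \<bullet> (V\<^sup>T *\<^sub>v (L\<^sup>T *\<^sub>v (U *\<^sub>v Y)))"
      using Diag_T[OF v_carrier] by (simp add: V_def)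
    also have "\<dots> = (V *\<^sub>v X) \<bullet> (L\<^sup>T *\<^sub>v (U *\<^sub>v Y))"
      by (rule sp_transpose[OF V X]) (use LT U Y in auto)
    also have "\<dots> = Y \<bullet> (U *\<^sub>v Y)"
      unfolding Y_def by (rule sp_transpose[OF L]) (use V X U Y Y_def in auto)
    finally show ?thesis using e by simp
  qed
  have den: "x \<bullet> ((L\<^sup>T * U * L) *\<^sub>v x) = X \<bullet> (U *\<^sub>v X)"
  proof -
    have e: "(L\<^sup>T * U * L) *\<^sub>v x = L\<^sup>T *\<^sub>v (U *\<^sub>v X)"
      using L LT U xn by (simp add: X_def mv mcn del: assoc_mult_mat)
    show ?thesis unfolding e X_def by (rule sp_transpose[OF L xn]) (use U X X_def in auto)
  qed
  have Xe: "X = vec n (\<lambda>i. \<Sum>j\<le>i. x $ j)" unfolding X_def L_def n_def using L_mult[OF x] .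
  have Ye: "Y = vec n (\<lambda>i. \<Sum>j\<le>i. v_vec k $ j * (\<Sum>l\<le>j. x $ l))"
  proof -
    have "V *\<^sub>v X = vec n (\<lambda>i. v_vec k $ i * X $ i)"
      unfolding V_def using Diag_mult[OF X, of "v_vec k"] v_carrier by (simp add: n_def)
    also have "\<dots> = vec n (\<lambda>i. v_vec k $ i * (\<Sum>j\<le>i. x $ j))"
      by (rule eq_vecI) (auto simp: Xe)
    moreover have "\<dots> \<in> carrier_vec (k+1)" by (simp add: n_def)
    ultimately have "Y = vec (k+1) (\<lambda>i. \<Sum>j\<le>i. vec n (\<lambda>i. v_vec k $ i * (\<Sum>j\<le>i. x $ j)) $ j)"
      unfolding Y_def L_def n_def by (simp add: L_mult)
    also have "\<dots> = vec n (\<lambda>i. \<Sum>j\<le>i. v_vec k $ j * (\<Sum>l\<le>j. x $ l))"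
      by (rule eq_vecI) (auto simp: n_def intro!: sum.cong)
    finally show ?thesis .
  qed
  have sq: "\<And>Z. Z \<in> carrier_vec n \<Longrightarrow> Z \<bullet> (U *\<^sub>v Z) = (\<Sum>i<n. u_vec k $ i * (Z $ i)^2)"
  proof -
    fix Z :: "real vec" assume Z: "Z \<in> carrier_vec n"
    have "U *\<^sub>v Z = vec n (\<lambda>i. u_vec k $ i * Z $ i)" unfolding U_def
      using Diag_mult[OF Z, of "u_vec k"] u_carrier by (simp add: n_def)
    then show "Z \<bullet> (U *\<^sub>v Z) = (\<Sum>i<n. u_vec k $ i * (Z $ i)^2)"
      using Z by (simp add: scalar_prod_def lessThan_atLeast0 power2_eq_square mult.commute mult.left_commute)
  qed
  show ?thesis
    unfolding R_val_def Let_def L_def[symmetric] U_def[symmetric] V_def[symmetric] num den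
    using sq[OF X] sq[OF Y] by (simp add: Xe Ye n_def)
qed


context fixes k :: nat assumes k1: "1 \<le> k"
begin

lemma u_eq: "j \<le> k \<Longrightarrow> u_vec k $ j = wt k j / 2"
proof -
  assume j: "j \<le> k"
  show ?thesis
  proof (cases "j = 0")
    case True then show ?thesis by (simp add: u_vec_def wt_def)
  next
    case False
    have "k + 2 - j = Suc (k+1-j)" using j by simp
    then show ?thesis using j False by (simp add: u_vec_def wt_def)
  qed
qed

lemma v_eq: "j \<le> k \<Longrightarrow> v_vec k $ j = 1 / real (cc k j)"
proof -
  assume j: "j \<le> k"
  have "1 \<le> (2::nat)^(k+1-j)" by simp
  then show ?thesis using j by (simp add: v_vec_def cc_def of_nat_diff)
qed

lemma rho_form: "j \<le> k \<Longrightarrow> wt k j * real (cc k j) = (if j = 0 then 1 else 1 - 1/2^(k+1-j))"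
proof -
  assume j: "j \<le> k"
  have "1 \<le> (2::nat)^(k+1-j)" by simp
  then have c: "j \<noteq> 0 \<Longrightarrow> real (cc k j) = 2^(k+1-j) - 1" by (simp add: cc_def of_nat_diff)
  show ?thesis
  proof (cases "j = 0")
    case True then show ?thesis by (simp add: wt_def cc_def)
  next
    case False then show ?thesis using c by (simp add: wt_def field_simps)
  qed
qed

definition rr :: "nat \<Rightarrow> real" where "rr j = (if j \<le> k then wt k j * real (cc k j) else 0)"

lemma u_diff: "j \<le> k \<Longrightarrow> (rr j - rr (Suc j)) / 2 = u_vec k $ j"
proof -
  assume j: "j \<le> k"
  consider "j = k" | "j = 0" "j < k" | "0 < j" "j < k" using j by linarith
  then show ?thesis
  proof cases
    case 1
    then show ?thesis using k1 by (simp add: rr_def rho_form u_vec_def)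
  next
    case 2
    have "(1 - (1 - 1 / 2 ^ k)) / 2 = (1::real) / 2^(k+1)" by simp
    then show ?thesis using 2 by (simp add: rr_def rho_form u_vec_def)
  next
    case 3
    define m where "m = k - j"
    have m: "k + 1 - j = Suc m" "k - j = m" "k + 2 - j = Suc (Suc m)" using 3 by (auto simp: m_def)
    have "(1 - 1/2^(Suc m) - (1 - 1/2^m)) / 2 = (1::real) / 2^(Suc (Suc m))" by (simp add: field_simps)
    then show ?thesis using 3 m by (simp add: rr_def rho_form u_vec_def Suc_diff_le)
  qed
qed

lemma identity:
  assumes x: "x \<in> carrier_vec (k+1)" and X: "\<And>j. X j = (\<Sum>l\<le>j. x $ l)"
  defines "a \<equiv> \<lambda>j. X j / real (cc k j)"
  shows "(\<Sum>j<k+1. wt k j * real (cc k j) * (a j * (\<Sum>l<j. a l) + a j * a j / 2)) /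
         (\<Sum>j<k+1. wt k j * (real (cc k j) * a j) * (real (cc k j) * a j) / 2) = R_val k x"
proof -
  define S where "S = (\<lambda>n. \<Sum>l<n. a l)"
  have ca: "\<And>j. j \<le> k \<Longrightarrow> real (cc k j) * a j = X j" using cc_pos[OF k1] unfolding a_def by simp
  have den: "(\<Sum>j<k+1. wt k j * (real (cc k j) * a j) * (real (cc k j) * a j) / 2) =
        (\<Sum>i<k+1. u_vec k $ i * (\<Sum>j\<le>i. x $ j)^2)"
    by (rule sum.cong) (auto simp: ca u_eq X power2_eq_square)
  have inner: "\<And>i. i \<le> k \<Longrightarrow> (\<Sum>j\<le>i. v_vec k $ j * (\<Sum>l\<le>j. x $ l)) = S (Suc i)"
    unfolding S_def lessThan_Suc_atMost
    by (rule sum.cong) (auto simp: v_eq a_def X)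
  have "(\<Sum>i<k+1. u_vec k $ i * (\<Sum>j\<le>i. v_vec k $ j * (\<Sum>l\<le>j. x $ l))^2) =
        (\<Sum>i<k+1. (rr i - rr (Suc i)) * (S (Suc i))^2) / 2"
    unfolding sum_divide_distrib by (rule sum.cong) (auto simp: inner u_diff[symmetric])
  also have "(\<Sum>i<k+1. (rr i - rr (Suc i)) * (S (Suc i))^2) = (\<Sum>j<k+1. rr j * ((S (Suc j))^2 - (S j)^2))"
    using abel[of rr "\<lambda>n. (S n)^2" "k+1"] by (simp add: rr_def S_def)
  also have "\<dots> = (\<Sum>j<k+1. 2 * (wt k j * real (cc k j) * (a j * (\<Sum>l<j. a l) + a j * a j / 2)))"
    by (rule sum.cong) (auto simp: rr_def S_def power2_eq_square algebra_simps)
  finally have num: "(\<Sum>i<k+1. u_vec k $ i * (\<Sum>j\<le>i. v_vec k $ j * (\<Sum>l\<le>j. x $ l))^2) =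
       (\<Sum>j<k+1. wt k j * real (cc k j) * (a j * (\<Sum>l<j. a l) + a j * a j / 2))"
    by (simp add: sum_distrib_left[symmetric])
  show ?thesis unfolding R_val_explicit[OF x] num den ..
qed

end

theorem lemma1:
  fixes k :: nat and x :: "real vec"
  assumes "1 \<le> k"
    and "x \<in> carrier_vec (k+1)"
    and "\<forall>i<k+1. 0 < x $ i"
  shows "ereal (R_val k x) \<le> KB_ratio"
proof -
  note k1 = assms(1)
  define X where "X = (\<lambda>j. \<Sum>l\<le>j. x $ l)"
  have Xpos: "\<And>j. j \<le> k \<Longrightarrow> 0 < X j"
    unfolding X_def using assms(3) by (intro sum_pos) auto
  define f where "f = (\<lambda>t. cost (nn k (Bt k X t)) (ww k (Bt k X t)) (bkb k (Bt k X t)) /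
             cost (nn k (Bt k X t)) (ww k (Bt k X t)) (bopt k (Bt k X t)))"
  have Xe: "\<And>j. X j = (\<Sum>l\<le>j. x $ l)" by (simp add: X_def)
  note r = ratio_lim[of k X, OF k1 Xpos]
  note i = identity[OF k1 assms(2), of X, OF Xe]
  have lim: "f \<longlonglongrightarrow> R_val k x"
    using r unfolding i f_def .
  show ?thesis unfolding KB_ratio_def
  proof (rule Inf_greatest, clarify)
    fix \<rho> :: real
    assume r1: "1 \<le> \<rho>" and H: "\<forall>n s w b. valid_instance n s w \<longrightarrow> KB_output n s w b \<longrightarrow> cost n w b \<le> \<rho> * OPT n s w"
    have "\<forall>t\<ge>0. f t \<le> \<rho>"
    proof (intro allI impI)
      fix t :: nat
      define B where "B = Bt k X t"
      have v: "valid_instance (nn k B) (ss k B) (ww k B)" by (rule valid[OF k1])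
      have "cost (nn k B) (ww k B) (bkb k B) \<le> \<rho> * OPT (nn k B) (ss k B) (ww k B)"
        using H v kb_output[OF k1] by blast
      also have "\<dots> \<le> \<rho> * cost (nn k B) (ww k B) (bopt k B)"
        using OPT_le[OF v opt_feasible[OF k1]] r1 by (intro mult_left_mono) auto
      finally have le: "cost (nn k B) (ww k B) (bkb k B) \<le> \<rho> * cost (nn k B) (ww k B) (bopt k B)" .
      have nn0: "0 \<le> cost (nn k B) (ww k B) (bopt k B)"
        unfolding cost_sum using v unfolding valid_instance_def
        by (intro sum_nonneg mult_nonneg_nonneg) (auto simp: less_imp_le)
      show "f t \<le> \<rho>"
      proof (cases "cost (nn k B) (ww k B) (bopt k B) = 0")
        case True then show ?thesis using r1 by (simp add: f_def B_def)
      next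
        case False
        then have "0 < cost (nn k B) (ww k B) (bopt k B)" using nn0 by simp
        then show ?thesis using le by (simp add: f_def B_def pos_divide_le_eq)
      qed
    qed
    then have "R_val k x \<le> \<rho>" by (rule Lim_bounded[OF lim])
    then show "ereal (R_val k x) \<le> ereal \<rho>" by simp
  qed
qed

end
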